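(* Let $M\ge\frac52$, $\mu=\frac{2}{2M+3}$, and consider Algorithm A run on an input whose optimal offline makespan is $1$. Then for every $j\ge1$, the load of $m_1$ just after job $j$ has been handled is at most $1+\mu$.
   Context: Model (two hierarchical machines with migration, bin stretching). Jobs $1,2,\dots,n$ arrive one by one ($n$ unknown in advance). Job $j$ has a size $p_j>0$ and a grade of service (GoS) $g_j\in\{1,2\}$; a job of GoS $1$ may only be processed on machine $m_1$, a job of GoS $2$ may be processed on $m_1$ or on $m_2$. The load of a machine is the total size of the jobs assigned to it, and the makespan is the maximum load. When job $j$ arrives, the algorithm must assign it to a machine, and at the same time it may reassign (migrate) previously arrived jobs to other machines (respecting the GoS constraints), provided that the total size of the migrated jobs is at most $M\cdot p_j$; $M\ge 0$ is the migration factor. Bin stretching: the optimal offline makespan of the complete input is known in advance and scaled to $1$. Notation: $Y_{j}$ is the set of jobs on $m_2$ just after job $j$ has been handled (including migrations), $y_j$ its total size, $y_0=0$. $Z$ denotes the set of GoS-2 jobs currently on $m_1$. Algorithm A (with $\mu=\frac{2}{2M+3}$). On arrival of job $j$: (i) if $g_j=1$ or $y_{j-1}\ge 1-\mu$, assign $j$ to $m_1$; (ii) else if $y_{j-1}+p_j\le 1+\mu$, assign $j$ to $m_2$; (iii) otherwise, among all GoS-2 jobs arrived so far (the current $Z$, the current $Y_{j-1}$, and $j$), choose a subset $W$ of maximum total size subject to total size at most $1$; rearrange so that exactly the jobs of $W$ are on $m_2$ and all other arrived jobs are on $m_1$. *)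

theory Defs
  imports Complex_Main
begin

text \<open>Jobs are numbered 1..n; job i has size p i and grade of service g i (1 or 2).
  A machine assignment is described by the set S of jobs placed on m2.\<close>

definition load2 :: "(nat \<Rightarrow> real) \<Rightarrow> nat set \<Rightarrow> real" where
  "load2 p S = (\<Sum>i\<in>S. p i)"

definition load1 :: "(nat \<Rightarrow> real) \<Rightarrow> nat \<Rightarrow> nat set \<Rightarrow> real" where
  "load1 p j Y = (\<Sum>i\<in>{1..j} - Y. p i)"

definition feasible_assignment :: "(nat \<Rightarrow> nat) \<Rightarrow> nat \<Rightarrow> nat set \<Rightarrow> bool" where
  "feasible_assignment g n S \<longleftrightarrow> S \<subseteq> {i \<in> {1..n}. g i = 2}"

definition makespan :: "(nat \<Rightarrow> real) \<Rightarrow> nat \<Rightarrow> nat set \<Rightarrow> real" where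
  "makespan p n S = max (load1 p n S) (load2 p S)"

definition opt_makespan :: "(nat \<Rightarrow> real) \<Rightarrow> (nat \<Rightarrow> nat) \<Rightarrow> nat \<Rightarrow> real" where
  "opt_makespan p g n = Min (makespan p n ` {S. feasible_assignment g n S})"

definition mu :: "real \<Rightarrow> real" where
  "mu M = 2 / (2 * M + 3)"

text \<open>One step of Algorithm A: Y is Y_{j-1}, Y' is Y_j.  In step (iii) any subset W
  of maximum total size (subject to size at most 1) may be chosen.\<close>
definition algA_step ::
  "real \<Rightarrow> (nat \<Rightarrow> real) \<Rightarrow> (nat \<Rightarrow> nat) \<Rightarrow> nat \<Rightarrow> nat set \<Rightarrow> nat set \<Rightarrow> bool" where
  "algA_step M p g j Y Y' \<longleftrightarrow>
     (if g j = 1 \<or> load2 p Y \<ge> 1 - mu M then Y' = Y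
      else if load2 p Y + p j \<le> 1 + mu M then Y' = insert j Y
      else (Y' \<subseteq> {i \<in> {1..j}. g i = 2} \<and> load2 p Y' \<le> 1 \<and>
            (\<forall>W. W \<subseteq> {i \<in> {1..j}. g i = 2} \<and> load2 p W \<le> 1 \<longrightarrow> load2 p W \<le> load2 p Y')))"

definition algA_run ::
  "real \<Rightarrow> (nat \<Rightarrow> real) \<Rightarrow> (nat \<Rightarrow> nat) \<Rightarrow> nat \<Rightarrow> (nat \<Rightarrow> nat set) \<Rightarrow> bool" where
  "algA_run M p g n Y \<longleftrightarrow> Y 0 = {} \<and> (\<forall>j\<in>{1..n}. algA_step M p g j (Y (j - 1)) (Y j))"

end

theory Submission
  imports Defs
begin

lemma l1: "Y \<subseteq> {1..j} \<Longrightarrow> load1 p j Y = sum p {1..j} - load2 p Y"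
  unfolding load1_def load2_def by (simp add: sum_diff)

lemma l1S: "load1 p j S = sum p {1..j} - load2 p (S \<inter> {1..j})"
proof -
  have "{1..j} - S = {1..j} - (S \<inter> {1..j})" by blast
  then have "load1 p j S = load1 p j (S \<inter> {1..j})" unfolding load1_def by simp
  also have "\<dots> = sum p {1..j} - load2 p (S \<inter> {1..j})" by (rule l1) blast
  finally show ?thesis .
qed

lemma l1mono:
  assumes "\<forall>i\<in>{1..n}. p i > 0" "j \<le> n"
  shows "load1 p j S \<le> load1 p n S"
  unfolding load1_def
  by (rule sum_mono2) (use assms in \<open>auto intro: less_imp_le\<close>)

lemma inv:
  assumes pos: "\<forall>i\<in>{1..n}. p i > 0" and g: "\<forall>i\<in>{1..n}. g i \<in> {1,2}"
    and S: "S \<subseteq> {i\<in>{1..n}. g i = 2}" "load2 p S \<le> 1"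
    and run: "algA_run M p g n Y"
  shows "j \<le> n \<Longrightarrow> Y j \<subseteq> {i\<in>{1..j}. g i = 2} \<and>
     (load2 p (Y j) < 1 - mu M \<longrightarrow> load1 p j (Y j) \<le> load1 p j S)"
proof (induction j)
  case 0
  have "Y 0 = {}" using run unfolding algA_run_def by simp
  then show ?case by (simp add: load1_def)
next
  case (Suc j)
  have jn: "j \<le> n" using Suc.prems by simp
  note IH = Suc.IH[OF jn]
  have "Suc j \<in> {1..n}" using Suc.prems by simp
  then have "algA_step M p g (Suc j) (Y (Suc j - 1)) (Y (Suc j))"
    using run unfolding algA_run_def by blast
  then have step: "algA_step M p g (Suc j) (Y j) (Y (Suc j))" by simp
  have pj: "p (Suc j) > 0" using pos Suc.prems by simp
  have gj: "g (Suc j) \<in> {1,2}" using g Suc.prems by simp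
  have Yj: "Y j \<subseteq> {1..j}" using IH by blast
  have sumSuc: "sum p {1..Suc j} = sum p {1..j} + p (Suc j)" by simp
  have Smono: "load1 p j S \<le> load1 p (Suc j) S"
    by (rule l1mono) (use pos Suc.prems in auto)
  have Sg1: "load1 p (Suc j) S = load1 p j S + p (Suc j)" if "g (Suc j) = 1"
  proof -
    have "Suc j \<notin> S" using S(1) that by auto
    then have "{1..Suc j} - S = insert (Suc j) ({1..j} - S)" by auto
    then show ?thesis unfolding load1_def by simp
  qed
  define y where "y = load2 p (Y j)"
  show ?case
  proof (cases "g (Suc j) = 1 \<or> y \<ge> 1 - mu M")
    case True
    then have Y': "Y (Suc j) = Y j" using step unfolding algA_step_def y_def by simp
    have "load1 p (Suc j) (Y j) = load1 p j (Y j) + p (Suc j)"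
    proof -
      have "Y j \<subseteq> {1..Suc j}" using Yj by auto
      then show ?thesis using l1[of "Y j" j p] l1[of "Y j" "Suc j" p] Yj sumSuc by linarith
    qed
    then show ?thesis using Y' IH True Sg1 y_def by auto
  next
    case F1: False
    show ?thesis
    proof (cases "y + p (Suc j) \<le> 1 + mu M")
      case True
      then have Y': "Y (Suc j) = insert (Suc j) (Y j)"
        using step F1 unfolding algA_step_def y_def by simp
      have g2: "g (Suc j) = 2" using F1 gj by auto
      have nin: "Suc j \<notin> Y j" using Yj by auto
      have ld: "load2 p (Y (Suc j)) = y + p (Suc j)"
        using Y' nin Yj unfolding load2_def y_def by (simp add: finite_subset)
      have "Y (Suc j) \<subseteq> {1..Suc j}" using Y' Yj by auto
      then have "load1 p (Suc j) (Y (Suc j)) = load1 p j (Y j)"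
        using l1[of "Y j" j p] l1[of "Y (Suc j)" "Suc j" p] Yj sumSuc ld Y' y_def by auto
      moreover have "Y (Suc j) \<subseteq> {i\<in>{1..Suc j}. g i = 2}" using Y' IH g2 by auto
      ultimately show ?thesis using IH ld pj Smono y_def by auto
    next
      case False
      then have st: "Y (Suc j) \<subseteq> {i \<in> {1..Suc j}. g i = 2}"
        "\<forall>W. W \<subseteq> {i \<in> {1..Suc j}. g i = 2} \<and> load2 p W \<le> 1 \<longrightarrow> load2 p W \<le> load2 p (Y (Suc j))"
        using step F1 unfolding algA_step_def y_def by auto
      define W where "W = S \<inter> {1..Suc j}"
      have finS: "finite S" using S(1) by (rule finite_subset) simp
      have nn: "\<forall>b\<in>S. 0 \<le> p b" proof
        fix b assume "b \<in> S" then have "b \<in> {1..n}" using S(1) by auto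
        then show "0 \<le> p b" using pos by (simp add: less_imp_le)
      qed
      have "load2 p W \<le> load2 p S" unfolding load2_def W_def
        by (rule sum_mono2[OF finS]) (use nn in auto)
      then have "load2 p W \<le> 1" using S(2) by simp
      moreover have "W \<subseteq> {i \<in> {1..Suc j}. g i = 2}" using S(1) unfolding W_def by auto
      ultimately have "load2 p W \<le> load2 p (Y (Suc j))" using st(2) by blast
      moreover have "load1 p (Suc j) (Y (Suc j)) = sum p {1..Suc j} - load2 p (Y (Suc j))"
        by (rule l1) (use st(1) in auto)
      moreover have "load1 p (Suc j) S = sum p {1..Suc j} - load2 p W"
        unfolding W_def by (rule l1S)
      ultimately show ?thesis using st(1) by auto
    qed
  qed
qed

theorem mainTheorem3:
  fixes M :: real and p :: "nat \<Rightarrow> real" and g :: "nat \<Rightarrow> nat" and n :: nat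
    and Y :: "nat \<Rightarrow> nat set"
  assumes "M \<ge> 5 / 2"
    and "\<forall>i\<in>{1..n}. p i > 0"
    and "\<forall>i\<in>{1..n}. g i \<in> {1, 2}"
    and "opt_makespan p g n = 1"
    and "algA_run M p g n Y"
  shows "\<forall>j\<in>{1..n}. load1 p j (Y j) \<le> 1 + mu M"
proof
  fix j assume j: "j \<in> {1..n}"
  have F: "{S. feasible_assignment g n S} = Pow {i\<in>{1..n}. g i = 2}"
    by (auto simp: feasible_assignment_def)
  have "Min (makespan p n ` {S. feasible_assignment g n S}) \<in> makespan p n ` {S. feasible_assignment g n S}"
    by (rule Min_in) (auto simp: F)
  then obtain S where S: "S \<subseteq> {i\<in>{1..n}. g i = 2}" "makespan p n S = 1"
    using assms(4) unfolding opt_makespan_def F by auto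
  have S1: "load1 p n S \<le> 1" and S2: "load2 p S \<le> 1"
    using S(2) unfolding makespan_def by auto
  have mu0: "mu M \<ge> 0" unfolding mu_def using assms(1) by simp
  have I: "Y j \<subseteq> {i\<in>{1..j}. g i = 2} \<and>
     (load2 p (Y j) < 1 - mu M \<longrightarrow> load1 p j (Y j) \<le> load1 p j S)"
    by (rule inv[OF assms(2) assms(3) S(1) S2 assms(5)]) (use j in simp)
  have mono: "load1 p j S \<le> load1 p n S" by (rule l1mono) (use assms(2) j in auto)
  show "load1 p j (Y j) \<le> 1 + mu M"
  proof (cases "load2 p (Y j) < 1 - mu M")
    case True
    then show ?thesis using I mono S1 mu0 by linarith
  next
    case False
    have e: "load1 p j (Y j) = sum p {1..j} - load2 p (Y j)" by (rule l1) (use I in auto)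
    have "sum p {1..j} \<le> sum p {1..n}"
      by (rule sum_mono2) (use assms(2) j in \<open>auto intro: less_imp_le\<close>)
    moreover have "load1 p n S = sum p {1..n} - load2 p S"
      by (rule l1) (use S(1) in auto)
    ultimately show ?thesis using e False S1 S2 by linarith
  qed
qed

end
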